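(* The hyperplane arrangement $\mathrm{I}(\mathrm{A}_1\oplus\mathfrak{g}_2,\mathbf{R})$ with $\mathbf{R}=(\mathbf{2},\mathbf{7})$ has exactly four chambers inside the open dual fundamental Weyl chamber, and their adjacency graph is a chain $1-2-3-4$. With respect to the sign vector $(\varpi^{(\mathbf{2},\mathbf{7})}_5,\varpi^{(\mathbf{2},\mathbf{7})}_6,\varpi^{(\mathbf{2},\mathbf{7})}_7)$, the chambers are: chamber 1: signs $(+,+,+)$, explicitly $0<\tfrac{1}{2}\phi_2<\phi_1<\tfrac{2}{3}\phi_2,\ \phi_1<\psi_1$; chamber 2: signs $(+,+,-)$, explicitly $0<\tfrac{1}{2}\phi_2<\phi_1<\tfrac{2}{3}\phi_2,\ \phi_2-\phi_1<\psi_1<\phi_1$; chamber 3: signs $(+,-,-)$, explicitly $0<\tfrac{3}{2}\phi_1<\phi_2<2\phi_1,\ 2\phi_1-\phi_2<\psi_1<\phi_2-\phi_1$; chamber 4: signs $(-,-,-)$, explicitly $0<\tfrac{3}{2}\phi_1<\phi_2<2\phi_1,\ 0<\psi_1<2\phi_1-\phi_2$. The wall between chamber $i$ and chamber $i+1$ ($i=1,2,3$) is the hyperplane orthogonal to the weight $\varpi^{(\mathbf{2},\mathbf{7})}_{8-i}$.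
   Context: Consider the semi-simple Lie algebra $\mathfrak{g}=\mathrm{A}_1\oplus\mathfrak{g}_2$ and the bifundamental representation $(\mathbf{2},\mathbf{7})$. Weights are written $(a;b,c)$ in the basis of fundamental weights, with $(a)$ a weight of $\mathrm{A}_1$ and $(b,c)$ a weight of $\mathfrak{g}_2$; a coroot vector is $\phi=(\psi_1;\phi_1,\phi_2)$ in the basis of fundamental coroots, and a weight acts on it by the natural pairing. The open dual fundamental Weyl chamber is $\psi_1>0$, $2\phi_1-\phi_2>0$, $-3\phi_1+2\phi_2>0$. The hyperplane arrangement $\mathrm{I}(\mathfrak{g},\mathbf{R})$ consists of the hyperplanes orthogonal (kernels) to the weights of $\mathbf{R}$, restricted to this open dual fundamental Weyl chamber. The relevant weights of $(\mathbf{2},\mathbf{7})$ are $\varpi^{(\mathbf{2},\mathbf{7})}_5=(1;-2,1)$, $\varpi^{(\mathbf{2},\mathbf{7})}_6=(1;1,-1)$, $\varpi^{(\mathbf{2},\mathbf{7})}_7=(1;-1,0)$; these are the only weights of $(\mathbf{2},\mathbf{7})$ whose hyperplanes meet the interior of the Weyl chamber. Adding the summands $(\mathbf{3},\mathbf{1}),(\mathbf{1},\mathbf{14}),(\mathbf{2},\mathbf{1}),(\mathbf{1},\mathbf{7})$ to $\mathbf{R}$ does not change the chamber structure. *)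

theory Defs
  imports "HOL-Analysis.Analysis"
begin

text \<open>Coroot vectors phi = (psi1, phi1, phi2) in the basis of fundamental coroots of
  A1 + g2 are modelled as points of real \<times> real \<times> real.  A weight (a; b, c) in the
  basis of fundamental weights is an integer triple, acting by the natural pairing.\<close>

type_synonym coroot = "real \<times> real \<times> real"
type_synonym weight = "int \<times> int \<times> int"

definition pairing :: "weight \<Rightarrow> coroot \<Rightarrow> real" where
  "pairing w p = (case w of (a, b, c) \<Rightarrow> case p of (psi, ph1, ph2) \<Rightarrow>
      of_int a * psi + of_int b * ph1 + of_int c * ph2)"

text \<open>Weights of the 7 of g2 (highest weight (1,0), simple roots (2,-1), (-3,2)).\<close>
definition weights_g2_7 :: "(int \<times> int) list" where
  "weights_g2_7 = [(1,0), (-1,1), (2,-1), (0,0), (-2,1), (1,-1), (-1,0)]"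

definition weights_2_7 :: "weight list" where
  "weights_2_7 = [(a, b, c). a \<leftarrow> [1, -1], (b, c) \<leftarrow> weights_g2_7]"

definition w5 :: weight where "w5 = (1, -2, 1)"
definition w6 :: weight where "w6 = (1, 1, -1)"
definition w7 :: weight where "w7 = (1, -1, 0)"

definition weyl_chamber :: "coroot set" where
  "weyl_chamber = {(psi, ph1, ph2). psi > 0 \<and> 2 * ph1 - ph2 > 0 \<and> - 3 * ph1 + 2 * ph2 > 0}"

definition hyperplane :: "weight \<Rightarrow> coroot set" where
  "hyperplane w = {p. pairing w p = 0}"

definition arr_hyperplanes :: "coroot set set" where
  "arr_hyperplanes = hyperplane ` set weights_2_7"

definition arr_chambers :: "coroot set set" where
  "arr_chambers = components (weyl_chamber - \<Union> arr_hyperplanes)"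

definition adjacent_via :: "coroot set \<Rightarrow> coroot set \<Rightarrow> coroot set \<Rightarrow> bool" where
  "adjacent_via C D H \<longleftrightarrow> C \<noteq> D \<and> H \<in> arr_hyperplanes \<and>
     (\<exists>p \<in> weyl_chamber. p \<in> H \<and> p \<in> closure C \<and> p \<in> closure D \<and>
        (\<forall>H' \<in> arr_hyperplanes. p \<in> H' \<longrightarrow> H' = H))"

definition sign_vec :: "coroot \<Rightarrow> real \<times> real \<times> real" where
  "sign_vec p = (sgn (pairing w5 p), sgn (pairing w6 p), sgn (pairing w7 p))"

definition chamber_expl :: "nat \<Rightarrow> coroot set" where
  "chamber_expl i =
    (if i = 1 then {(psi, ph1, ph2). 0 < ph2 / 2 \<and> ph2 / 2 < ph1 \<and> ph1 < 2 / 3 * ph2 \<and> ph1 < psi}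
     else if i = 2 then {(psi, ph1, ph2). 0 < ph2 / 2 \<and> ph2 / 2 < ph1 \<and> ph1 < 2 / 3 * ph2 \<and>
                                           ph2 - ph1 < psi \<and> psi < ph1}
     else if i = 3 then {(psi, ph1, ph2). 0 < 3 / 2 * ph1 \<and> 3 / 2 * ph1 < ph2 \<and> ph2 < 2 * ph1 \<and>
                                           2 * ph1 - ph2 < psi \<and> psi < ph2 - ph1}
     else {(psi, ph1, ph2). 0 < 3 / 2 * ph1 \<and> 3 / 2 * ph1 < ph2 \<and> ph2 < 2 * ph1 \<and>
                             0 < psi \<and> psi < 2 * ph1 - ph2})"

definition chamber_signs :: "nat \<Rightarrow> real \<times> real \<times> real" where
  "chamber_signs i =
    (if i = 1 then (1, 1, 1) else if i = 2 then (1, 1, -1)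
     else if i = 3 then (1, -1, -1) else (-1, -1, -1))"

definition wall_weight :: "nat \<Rightarrow> weight" where
  "wall_weight i = (if i = 1 then w7 else if i = 2 then w6 else w5)"

end

theory Submission
  imports Defs
begin

definition hs :: "weight \<Rightarrow> coroot set" where
  "hs w = {p. 0 < pairing w p}"
definition chs :: "weight \<Rightarrow> coroot set" where
  "chs w = {p. 0 \<le> pairing w p}"

lemma pairing_alt: "pairing (a,b,c) p = of_int a * fst p + of_int b * fst (snd p) + of_int c * snd (snd p)"
  by (cases p) (auto simp: pairing_def)

lemma cont_pairing: "continuous_on UNIV (pairing (a,b,c))"
  unfolding pairing_alt[abs_def] by (intro continuous_intros)

lemma open_hs: "open (hs (a,b,c))"
  unfolding hs_def using open_Collect_less[OF continuous_on_const cont_pairing] by simp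

lemma closed_chs: "closed (chs (a,b,c))"
proof -
  have "closed {p. (\<lambda>_. 0::real) p \<le> pairing (a,b,c) p}"
    apply (rule closed_Collect_le) apply (rule continuous_on_const) by (rule cont_pairing)
  then show ?thesis by (simp add: chs_def)
qed

lemma closure_hs: "closure (hs (a,b,c)) \<subseteq> chs (a,b,c)"
  by (rule closure_minimal[OF _ closed_chs]) (auto simp: hs_def chs_def)

lemma linear_pairing: "linear (pairing (a,b,c))"
  by (rule linearI) (auto simp: pairing_alt algebra_simps)

lemma convex_hs: "convex (hs (a,b,c))"
proof -
  have "hs (a,b,c) = pairing (a,b,c) -` {0<..}" by (auto simp: hs_def)
  then show ?thesis using convex_linear_vimage[OF linear_pairing] by simp
qed

lemma c1: "chamber_expl 1 = hs (0,0,1) \<inter> hs (0,2,-1) \<inter> hs (0,-3,2) \<inter> hs (1,-1,0)"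
  by (auto simp: chamber_expl_def hs_def pairing_def)
lemma c2: "chamber_expl 2 = hs (0,0,1) \<inter> hs (0,2,-1) \<inter> hs (0,-3,2) \<inter> hs (1,1,-1) \<inter> hs (-1,1,0)"
  by (auto simp: chamber_expl_def hs_def pairing_def)
lemma c3: "chamber_expl 3 = hs (0,1,0) \<inter> hs (0,-3,2) \<inter> hs (0,2,-1) \<inter> hs (1,-2,1) \<inter> hs (-1,-1,1)"
  by (auto simp: chamber_expl_def hs_def pairing_def)
lemma c4: "chamber_expl 4 = hs (0,1,0) \<inter> hs (0,-3,2) \<inter> hs (0,2,-1) \<inter> hs (1,0,0) \<inter> hs (-1,2,-1)"
  by (auto simp: chamber_expl_def hs_def pairing_def)

lemma four: "i \<in> {1..4::nat} \<Longrightarrow> i = 1 \<or> i = 2 \<or> i = 3 \<or> i = 4" by auto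

lemma four_cases: "i \<in> {1..4::nat} \<Longrightarrow> P 1 \<Longrightarrow> P 2 \<Longrightarrow> P 3 \<Longrightarrow> P 4 \<Longrightarrow> P i"
  by (drule four) auto

lemma open_ch: "i \<in> {1..4} \<Longrightarrow> open (chamber_expl i)"
  by (erule four_cases) (simp_all only: c1 c2 c3 c4 open_hs open_Int)

lemma convex_ch: "i \<in> {1..4} \<Longrightarrow> convex (chamber_expl i)"
  by (erule four_cases) (simp_all only: c1 c2 c3 c4 convex_hs convex_Int)

lemma mem1: "(7,6,10) \<in> chamber_expl 1" by (simp add: chamber_expl_def)
lemma mem2: "(5,6,10) \<in> chamber_expl 2" by (simp add: chamber_expl_def)
lemma mem3: "(3,6,10) \<in> chamber_expl 3" by (simp add: chamber_expl_def)
lemma mem4: "(1,6,10) \<in> chamber_expl 4" by (simp add: chamber_expl_def)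

lemma wts: "set weights_2_7 = {(1,1,0),(1,-1,1),(1,2,-1),(1,0,0),(1,-2,1),(1,1,-1),(1,-1,0),
   (-1,1,0),(-1,-1,1),(-1,2,-1),(-1,0,0),(-1,-2,1),(-1,1,-1),(-1,-1,0)}"
  by (simp add: weights_2_7_def weights_g2_7_def insert_commute)



lemma hyp_w: "p \<in> weyl_chamber \<Longrightarrow> p \<in> \<Union> arr_hyperplanes \<longleftrightarrow> pairing w5 p = 0 \<or> pairing w6 p = 0 \<or> pairing w7 p = 0"
  apply (cases p)
  apply (simp add: arr_hyperplanes_def wts weyl_chamber_def hyperplane_def pairing_def w5_def w6_def w7_def)
  apply (intro iffI; elim disjE conjE)
  apply linarith+
  done


lemma in_ch_any: "p \<in> \<Union> (chamber_expl ` {1..4}) \<longleftrightarrow> p \<in> chamber_expl 1 \<or> p \<in> chamber_expl 2 \<or> p \<in> chamber_expl 3 \<or> p \<in> chamber_expl 4"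
proof -
  have e: "{1..4::nat} = {1,2,3,4}" by auto
  show ?thesis unfolding e by blast
qed

lemma union_S: "weyl_chamber - \<Union> arr_hyperplanes = \<Union> (chamber_expl ` {1..4})"
proof (intro set_eqI iffI)
  fix p assume "p \<in> weyl_chamber - \<Union> arr_hyperplanes"
  then have W: "p \<in> weyl_chamber" and N0: "p \<notin> \<Union> arr_hyperplanes" by auto
  have N: "\<not> (pairing w5 p = 0 \<or> pairing w6 p = 0 \<or> pairing w7 p = 0)"
    using hyp_w[OF W] N0 by blast
  obtain x y z where p: "p = (x,y,z)" by (cases p)
  have "p \<in> chamber_expl 1 \<or> p \<in> chamber_expl 2 \<or> p \<in> chamber_expl 3 \<or> p \<in> chamber_expl 4"
  proof -
    have w: "x > 0" "2*y - z > 0" "-3*y+2*z > 0" using W by (auto simp: p weyl_chamber_def)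
    have n: "x - 2*y + z \<noteq> 0" "x + y - z \<noteq> 0" "x - y \<noteq> 0" using N by (auto simp: p pairing_def w5_def w6_def w7_def)
    show ?thesis
    proof (cases "x > y")
      case True then show ?thesis using w by (simp add: p chamber_expl_def)
    next
      case F1: False
      then have x1: "x < y" using n by auto
      show ?thesis
      proof (cases "x > z - y")
        case True then show ?thesis using w x1 by (simp add: p chamber_expl_def)
      next
        case False
        then have x2: "x < z - y" using n by auto
        show ?thesis
        proof (cases "x > 2*y - z")
          case True then show ?thesis using w x2 by (simp add: p chamber_expl_def)
        next
          case False
          then have x3: "x < 2*y - z" using n by auto
          then show ?thesis using w by (simp add: p chamber_expl_def)
        qed
      qed
    qed
  qed
  then show "p \<in> \<Union> (chamber_expl ` {1..4})" using in_ch_any by blast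
next
  fix p assume "p \<in> \<Union> (chamber_expl ` {1..4})"
  then have H: "p \<in> chamber_expl 1 \<or> p \<in> chamber_expl 2 \<or> p \<in> chamber_expl 3 \<or> p \<in> chamber_expl 4"
    using in_ch_any by blast
  obtain x y z where p: "p = (x,y,z)" by (cases p)
  have W: "p \<in> weyl_chamber" using H
    by (auto simp: p weyl_chamber_def chamber_expl_def)
  moreover have "\<not> (pairing w5 p = 0 \<or> pairing w6 p = 0 \<or> pairing w7 p = 0)" using H
    by (auto simp: p chamber_expl_def pairing_def w5_def w6_def w7_def)
  ultimately show "p \<in> weyl_chamber - \<Union> arr_hyperplanes" using hyp_w by blast
qed

lemma ch_unique: "i \<in> {1..4} \<Longrightarrow> j \<in> {1..4} \<Longrightarrow> p \<in> chamber_expl i \<Longrightarrow> p \<in> chamber_expl j \<Longrightarrow> i = j"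
  apply (cases p)
  apply (drule four)+
  apply (elim disjE; simp add: chamber_expl_def)
  done

lemma disj: "pairwise disjnt (chamber_expl ` {1..4})"
  unfolding pairwise_def disjnt_def using ch_unique by blast

lemma comps: "arr_chambers = chamber_expl ` {1..4}"
  unfolding arr_chambers_def
proof (rule components_open_unique[OF disj union_S[symmetric]])
  fix X assume "X \<in> chamber_expl ` {1..4}"
  then obtain i where i: "i \<in> {1..4}" and X: "X = chamber_expl i" by auto
  have "X \<noteq> {}" unfolding X using i
    by (rule four_cases) (use mem1 mem2 mem3 mem4 in blast)+
  then show "open X \<and> connected X \<and> X \<noteq> {}"
    using open_ch[OF i] convex_connected[OF convex_ch[OF i]] X by simp
qed


lemma ch_ne: "i \<in> {1..4} \<Longrightarrow> \<exists>p. p \<in> chamber_expl i"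
  by (erule four_cases) (use mem1 mem2 mem3 mem4 in blast)+

lemma card4: "card (chamber_expl ` {1..4}) = 4"
proof -
  have "inj_on chamber_expl {1..4}"
  proof (rule inj_onI)
    fix i j assume i: "i \<in> {1..4::nat}" and j: "j \<in> {1..4::nat}" and e: "chamber_expl i = chamber_expl j"
    obtain p where "p \<in> chamber_expl i" using ch_ne[OF i] by blast
    then show "i = j" using ch_unique[OF i j] e by auto
  qed
  then show ?thesis by (simp add: card_image)
qed

lemma sign1: "chamber_expl 1 = {p \<in> weyl_chamber. sign_vec p = chamber_signs 1}"
proof (rule set_eqI)
  fix p :: coroot
  obtain x y z where p: "p = (x,y,z)" by (cases p)
  show "p \<in> chamber_expl 1 \<longleftrightarrow> p \<in> {p \<in> weyl_chamber. sign_vec p = chamber_signs 1}"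
    by (auto simp: p chamber_expl_def weyl_chamber_def sign_vec_def chamber_signs_def pairing_def w5_def w6_def w7_def sgn_if split: if_splits)
qed

lemma sign2: "chamber_expl 2 = {p \<in> weyl_chamber. sign_vec p = chamber_signs 2}"
proof (rule set_eqI)
  fix p :: coroot
  obtain x y z where p: "p = (x,y,z)" by (cases p)
  show "p \<in> chamber_expl 2 \<longleftrightarrow> p \<in> {p \<in> weyl_chamber. sign_vec p = chamber_signs 2}"
    by (auto simp: p chamber_expl_def weyl_chamber_def sign_vec_def chamber_signs_def pairing_def w5_def w6_def w7_def sgn_if split: if_splits)
qed

lemma sign3: "chamber_expl 3 = {p \<in> weyl_chamber. sign_vec p = chamber_signs 3}"
proof (rule set_eqI)
  fix p :: coroot
  obtain x y z where p: "p = (x,y,z)" by (cases p)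
  show "p \<in> chamber_expl 3 \<longleftrightarrow> p \<in> {p \<in> weyl_chamber. sign_vec p = chamber_signs 3}"
    by (auto simp: p chamber_expl_def weyl_chamber_def sign_vec_def chamber_signs_def pairing_def w5_def w6_def w7_def sgn_if split: if_splits)
qed

lemma sign4: "chamber_expl 4 = {p \<in> weyl_chamber. sign_vec p = chamber_signs 4}"
proof (rule set_eqI)
  fix p :: coroot
  obtain x y z where p: "p = (x,y,z)" by (cases p)
  show "p \<in> chamber_expl 4 \<longleftrightarrow> p \<in> {p \<in> weyl_chamber. sign_vec p = chamber_signs 4}"
    by (auto simp: p chamber_expl_def weyl_chamber_def sign_vec_def chamber_signs_def pairing_def w5_def w6_def w7_def sgn_if split: if_splits)
qed

lemma signs: "i \<in> {1..4} \<Longrightarrow> chamber_expl i = {p \<in> weyl_chamber. sign_vec p = chamber_signs i}"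
  by (erule four_cases) (rule sign1 sign2 sign3 sign4)+

lemma closure_pt:
  fixes p q :: coroot
  assumes "p \<noteq> q" "\<And>u. 0 < u \<Longrightarrow> u < 1 \<Longrightarrow> (1 - u) *\<^sub>R p + u *\<^sub>R q \<in> C"
  shows "p \<in> closure C"
proof -
  have "open_segment p q \<subseteq> C" using assms by (auto simp: in_segment)
  then have "closure (open_segment p q) \<subseteq> closure C" by (rule closure_mono)
  then show ?thesis using assms(1) by auto
qed

lemma cl12_1: "(6,6,10) \<in> closure (chamber_expl 1)"
  by (rule closure_pt[where q="(7,6,10)"]) (auto simp: chamber_expl_def algebra_simps)
lemma cl12_2: "(6,6,10) \<in> closure (chamber_expl 2)"
  by (rule closure_pt[where q="(5,6,10)"]) (auto simp: chamber_expl_def algebra_simps)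
lemma cl23_2: "(4,6,10) \<in> closure (chamber_expl 2)"
  by (rule closure_pt[where q="(5,6,10)"]) (auto simp: chamber_expl_def algebra_simps)
lemma cl23_3: "(4,6,10) \<in> closure (chamber_expl 3)"
  by (rule closure_pt[where q="(3,6,10)"]) (auto simp: chamber_expl_def algebra_simps)
lemma cl34_3: "(2,6,10) \<in> closure (chamber_expl 3)"
  by (rule closure_pt[where q="(3,6,10)"]) (auto simp: chamber_expl_def algebra_simps)
lemma cl34_4: "(2,6,10) \<in> closure (chamber_expl 4)"
  by (rule closure_pt[where q="(1,6,10)"]) (auto simp: chamber_expl_def algebra_simps)

lemma clo1: "closure (chamber_expl 1) \<subseteq> chs (1,-1,0)"
  unfolding c1 by (meson Int_lower2 closure_mono closure_hs order_trans)
lemma clo2: "closure (chamber_expl 2) \<subseteq> chs (1,1,-1) \<inter> chs (-1,1,0)"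
  unfolding c2 by (meson Int_lower2 Int_lower1 closure_mono closure_hs order_trans le_infI)
lemma clo3: "closure (chamber_expl 3) \<subseteq> chs (1,-2,1) \<inter> chs (-1,-1,1)"
  unfolding c3 by (meson Int_lower2 Int_lower1 closure_mono closure_hs order_trans le_infI)
lemma clo4: "closure (chamber_expl 4) \<subseteq> chs (-1,2,-1)"
  unfolding c4 by (meson Int_lower2 closure_mono closure_hs order_trans)

lemma adj_sym: "adjacent_via C D H = adjacent_via D C H"
  unfolding adjacent_via_def by blast

lemma adj_refl: "\<not> adjacent_via C C H"
  unfolding adjacent_via_def by blast

lemma nonadj: "closure C \<inter> closure D \<inter> weyl_chamber = {} \<Longrightarrow> \<not> adjacent_via C D H"
  unfolding adjacent_via_def by blast

lemma e13: "closure (chamber_expl 1) \<inter> closure (chamber_expl 3) \<inter> weyl_chamber = {}"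
  using clo1 clo3 by (fastforce simp: chs_def pairing_def weyl_chamber_def)
lemma e14: "closure (chamber_expl 1) \<inter> closure (chamber_expl 4) \<inter> weyl_chamber = {}"
  using clo1 clo4 by (fastforce simp: chs_def pairing_def weyl_chamber_def)
lemma e24: "closure (chamber_expl 2) \<inter> closure (chamber_expl 4) \<inter> weyl_chamber = {}"
  using clo2 clo4 by (fastforce simp: chs_def pairing_def weyl_chamber_def)


lemma mem_hyp: "p \<in> hyperplane v \<longleftrightarrow> pairing v p = 0"
  by (simp add: hyperplane_def)

lemma hneg5: "hyperplane (-1,2,-1) = hyperplane (1,-2,1)"
  by (auto simp: hyperplane_def pairing_def)
lemma hneg6: "hyperplane (-1,-1,1) = hyperplane (1,1,-1)"
  by (auto simp: hyperplane_def pairing_def)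
lemma hneg7: "hyperplane (-1,1,0) = hyperplane (1,-1,0)"
  by (auto simp: hyperplane_def pairing_def)

lemma in_arr5: "hyperplane w5 \<in> arr_hyperplanes" by (simp add: arr_hyperplanes_def wts w5_def)
lemma in_arr6: "hyperplane w6 \<in> arr_hyperplanes" by (simp add: arr_hyperplanes_def wts w6_def)
lemma in_arr7: "hyperplane w7 \<in> arr_hyperplanes" by (simp add: arr_hyperplanes_def wts w7_def)

lemma only12: "H' \<in> arr_hyperplanes \<Longrightarrow> (6,6,10) \<in> H' \<Longrightarrow> H' = hyperplane w7"
  by (auto simp: arr_hyperplanes_def wts mem_hyp pairing_def w7_def hneg7)
lemma only23: "H' \<in> arr_hyperplanes \<Longrightarrow> (4,6,10) \<in> H' \<Longrightarrow> H' = hyperplane w6"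
  by (auto simp: arr_hyperplanes_def wts mem_hyp pairing_def w6_def hneg6)
lemma only34: "H' \<in> arr_hyperplanes \<Longrightarrow> (2,6,10) \<in> H' \<Longrightarrow> H' = hyperplane w5"
  by (auto simp: arr_hyperplanes_def wts mem_hyp pairing_def w5_def hneg5)

lemma adj12: "adjacent_via (chamber_expl 1) (chamber_expl 2) H \<longleftrightarrow> H = hyperplane w7"
proof
  assume "adjacent_via (chamber_expl 1) (chamber_expl 2) H"
  then obtain p where p: "p \<in> H" "p \<in> closure (chamber_expl 1)" "p \<in> closure (chamber_expl 2)"
    "\<forall>H' \<in> arr_hyperplanes. p \<in> H' \<longrightarrow> H' = H"
    unfolding adjacent_via_def by blast
  have "p \<in> chs (1,-1,0)" "p \<in> chs (-1,1,0)" using p clo1 clo2 by auto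
  then have "p \<in> hyperplane w7" by (cases p) (simp add: chs_def mem_hyp pairing_def w7_def)
  then show "H = hyperplane w7" using p(4) in_arr7 by blast
next
  assume H: "H = hyperplane w7"
  have "(7,6,10) \<notin> chamber_expl 2" by (simp add: chamber_expl_def)
  then have ne: "chamber_expl 1 \<noteq> chamber_expl 2"
    using mem1 by blast
  have "(6,6,10) \<in> weyl_chamber" by (simp add: weyl_chamber_def)
  moreover have "(6,6,10) \<in> H" by (simp add: H mem_hyp pairing_def w7_def)
  ultimately show "adjacent_via (chamber_expl 1) (chamber_expl 2) H"
    unfolding adjacent_via_def using ne H in_arr7 cl12_1 cl12_2 only12 by blast
qed

lemma adj23: "adjacent_via (chamber_expl 2) (chamber_expl 3) H \<longleftrightarrow> H = hyperplane w6"
proof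
  assume "adjacent_via (chamber_expl 2) (chamber_expl 3) H"
  then obtain p where p: "p \<in> H" "p \<in> closure (chamber_expl 2)" "p \<in> closure (chamber_expl 3)"
    "\<forall>H' \<in> arr_hyperplanes. p \<in> H' \<longrightarrow> H' = H"
    unfolding adjacent_via_def by blast
  have "p \<in> chs (1,1,-1)" "p \<in> chs (-1,-1,1)" using p clo2 clo3 by auto
  then have "p \<in> hyperplane w6" by (cases p) (simp add: chs_def mem_hyp pairing_def w6_def)
  then show "H = hyperplane w6" using p(4) in_arr6 by blast
next
  assume H: "H = hyperplane w6"
  have "(5,6,10) \<notin> chamber_expl 3" by (simp add: chamber_expl_def)
  then have ne: "chamber_expl 2 \<noteq> chamber_expl 3"
    using mem2 by blast
  have "(4,6,10) \<in> weyl_chamber" by (simp add: weyl_chamber_def)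
  moreover have "(4,6,10) \<in> H" by (simp add: H mem_hyp pairing_def w6_def)
  ultimately show "adjacent_via (chamber_expl 2) (chamber_expl 3) H"
    unfolding adjacent_via_def using ne H in_arr6 cl23_2 cl23_3 only23 by blast
qed

lemma adj34: "adjacent_via (chamber_expl 3) (chamber_expl 4) H \<longleftrightarrow> H = hyperplane w5"
proof
  assume "adjacent_via (chamber_expl 3) (chamber_expl 4) H"
  then obtain p where p: "p \<in> H" "p \<in> closure (chamber_expl 3)" "p \<in> closure (chamber_expl 4)"
    "\<forall>H' \<in> arr_hyperplanes. p \<in> H' \<longrightarrow> H' = H"
    unfolding adjacent_via_def by blast
  have "p \<in> chs (1,-2,1)" "p \<in> chs (-1,2,-1)" using p clo3 clo4 by auto
  then have "p \<in> hyperplane w5" by (cases p) (simp add: chs_def mem_hyp pairing_def w5_def)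
  then show "H = hyperplane w5" using p(4) in_arr5 by blast
next
  assume H: "H = hyperplane w5"
  have "(3,6,10) \<notin> chamber_expl 4" by (simp add: chamber_expl_def)
  then have ne: "chamber_expl 3 \<noteq> chamber_expl 4"
    using mem3 by blast
  have "(2,6,10) \<in> weyl_chamber" by (simp add: weyl_chamber_def)
  moreover have "(2,6,10) \<in> H" by (simp add: H mem_hyp pairing_def w5_def)
  ultimately show "adjacent_via (chamber_expl 3) (chamber_expl 4) H"
    unfolding adjacent_via_def using ne H in_arr5 cl34_3 cl34_4 only34 by blast
qed

lemmas adjS = adj12 adj_sym[of "chamber_expl 2" "chamber_expl 1"]
  nonadj[OF e13] nonadj[OF e14] adj_sym[of "chamber_expl 3" "chamber_expl 1"] adj_sym[of "chamber_expl 4" "chamber_expl 1"]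

lemma adj_all: "i \<in> {1..4::nat} \<Longrightarrow> j \<in> {1..4::nat} \<Longrightarrow>
   adjacent_via (chamber_expl i) (chamber_expl j) H \<longleftrightarrow>
   ((j = i + 1 \<or> i = j + 1) \<and> H = hyperplane (wall_weight (min i j)))"
  apply (drule four)+
  apply (elim disjE)
  apply (simp_all add: adj_refl adjS[unfolded One_nat_def] adj12 adj23 adj34 adj_sym[of "chamber_expl 2" "chamber_expl 1"]
     adj_sym[of "chamber_expl 3" "chamber_expl 2"] adj_sym[of "chamber_expl 4" "chamber_expl 3"]
     nonadj[OF e13] nonadj[OF e14] nonadj[OF e24]
     adj_sym[of "chamber_expl 3" "chamber_expl 1"] adj_sym[of "chamber_expl 4" "chamber_expl 1"]
     adj_sym[of "chamber_expl 4" "chamber_expl 2"] wall_weight_def)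
  done

theorem mainTheorem7:
  shows "arr_chambers = chamber_expl ` {1..4} \<and>
         card arr_chambers = 4 \<and>
         (\<forall>i \<in> {1..4::nat}. chamber_expl i = {p \<in> weyl_chamber. sign_vec p = chamber_signs i}) \<and>
         (\<forall>i \<in> {1..4::nat}. \<forall>j \<in> {1..4::nat}. \<forall>H.
            adjacent_via (chamber_expl i) (chamber_expl j) H \<longleftrightarrow>
            ((j = i + 1 \<or> i = j + 1) \<and> H = hyperplane (wall_weight (min i j))))"
  using comps card4 signs adj_all by auto

end
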